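(* Let $\alpha\neq0$ be real, let $\mathbf{u}=(u_1,u_2)$ and $\mathbf{v}=(-u_1,u_2)$ be constant unit vectors with $u_1u_2\neq0$, and let $\mathbf{f}\in C^2_c(S^1;\mathbb{D})$. Then: (i) $\mathcal{L}_\alpha\mathbf{f}=0$ if and only if $\mathbf{f}=\tilde\nabla\varphi$ for some function $\varphi$; (ii) $\mathcal{T}_\alpha\mathbf{f}=0$ if and only if $\mathbf{f}=\tilde\nabla^\perp\psi$ for some function $\psi$.
   Context: $\mathbb{D}$ is the open unit disc in $\mathbb{R}^2$; $C_c^2(S^1;\mathbb{D})$ is the space of $C^2$ vector fields with compact support in $\mathbb{D}$. $\mathbf{a}^\perp=(-a_2,a_1)$. $\mathcal{L}_\alpha\mathbf{f}(\mathbf{x})=-\int_0^\infty\mathbf{u}\cdot\mathbf{f}(\mathbf{x}+t\mathbf{u})\,dt+\alpha\int_0^\infty\mathbf{v}\cdot\mathbf{f}(\mathbf{x}+t\mathbf{v})\,dt$ and $\mathcal{T}_\alpha\mathbf{f}(\mathbf{x})=-\int_0^\infty\mathbf{u}^\perp\cdot\mathbf{f}(\mathbf{x}+t\mathbf{u})\,dt+\alpha\int_0^\infty\mathbf{v}^\perp\cdot\mathbf{f}(\mathbf{x}+t\mathbf{v})\,dt$. Define $\partial_{\tilde x_1}=-(1+\alpha)u_1u_2\partial_{x_1}+(1-\alpha)u_2^2\partial_{x_2}$, $\partial_{\tilde x_2}=(1-\alpha)u_1^2\partial_{x_1}-(1+\alpha)u_1u_2\partial_{x_2}$ (the partial derivatives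 in the linear coordinates $\tilde x$ given by $x_1=-(1+\alpha)u_1u_2\tilde x_1+(1-\alpha)u_1^2\tilde x_2$, $x_2=(1-\alpha)u_2^2\tilde x_1-(1+\alpha)u_1u_2\tilde x_2$), and $\tilde\nabla\varphi=(\partial_{\tilde x_1}\varphi,\partial_{\tilde x_2}\varphi)$, $\tilde\nabla^\perp\psi=(-\partial_{\tilde x_2}\psi,\partial_{\tilde x_1}\psi)$. *)

theory Defs
  imports "HOL-Analysis.Analysis"
begin

definition C2 :: "('a::euclidean_space \<Rightarrow> 'b::real_normed_vector) \<Rightarrow> bool" where
  "C2 f \<longleftrightarrow> (\<exists>f' f''. (\<forall>x. (f has_derivative blinfun_apply (f' x)) (at x)) \<and>
      (\<forall>x. (f' has_derivative blinfun_apply (f'' x)) (at x)) \<and> continuous_on UNIV f'')"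

definition supp_in_disc :: "(real^2 \<Rightarrow> real^2) \<Rightarrow> bool" where
  "supp_in_disc f \<longleftrightarrow> compact (closure {x. f x \<noteq> 0}) \<and> closure {x. f x \<noteq> 0} \<subseteq> ball 0 1"

definition perp :: "real^2 \<Rightarrow> real^2" where
  "perp a = vector [-(a$2), a$1]"

definition pd :: "2 \<Rightarrow> (real^2 \<Rightarrow> real) \<Rightarrow> real^2 \<Rightarrow> real" where
  "pd i \<phi> x = frechet_derivative \<phi> (at x) (axis i 1)"

definition dt1 :: "real \<Rightarrow> real^2 \<Rightarrow> (real^2 \<Rightarrow> real) \<Rightarrow> real^2 \<Rightarrow> real" where
  "dt1 \<alpha> u \<phi> x = -(1+\<alpha>) * u$1 * u$2 * pd 1 \<phi> x + (1-\<alpha>) * (u$2)^2 * pd 2 \<phi> x"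

definition dt2 :: "real \<Rightarrow> real^2 \<Rightarrow> (real^2 \<Rightarrow> real) \<Rightarrow> real^2 \<Rightarrow> real" where
  "dt2 \<alpha> u \<phi> x = (1-\<alpha>) * (u$1)^2 * pd 1 \<phi> x - (1+\<alpha>) * u$1 * u$2 * pd 2 \<phi> x"

definition tgrad :: "real \<Rightarrow> real^2 \<Rightarrow> (real^2 \<Rightarrow> real) \<Rightarrow> real^2 \<Rightarrow> real^2" where
  "tgrad \<alpha> u \<phi> x = vector [dt1 \<alpha> u \<phi> x, dt2 \<alpha> u \<phi> x]"

definition tgrad_perp :: "real \<Rightarrow> real^2 \<Rightarrow> (real^2 \<Rightarrow> real) \<Rightarrow> real^2 \<Rightarrow> real^2" where
  "tgrad_perp \<alpha> u \<psi> x = vector [-(dt2 \<alpha> u \<psi> x), dt1 \<alpha> u \<psi> x]"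

definition Lop :: "real \<Rightarrow> real^2 \<Rightarrow> real^2 \<Rightarrow> (real^2 \<Rightarrow> real^2) \<Rightarrow> real^2 \<Rightarrow> real" where
  "Lop \<alpha> u v f x = - integral {0..} (\<lambda>t. u \<bullet> f (x + t *\<^sub>R u))
                     + \<alpha> * integral {0..} (\<lambda>t. v \<bullet> f (x + t *\<^sub>R v))"

definition Top :: "real \<Rightarrow> real^2 \<Rightarrow> real^2 \<Rightarrow> (real^2 \<Rightarrow> real^2) \<Rightarrow> real^2 \<Rightarrow> real" where
  "Top \<alpha> u v f x = - integral {0..} (\<lambda>t. perp u \<bullet> f (x + t *\<^sub>R u))
                     + \<alpha> * integral {0..} (\<lambda>t. perp v \<bullet> f (x + t *\<^sub>R v))"

end

theory Submission
  imports Defs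
begin

lemma vec2_eq: "(x::real^2) = y \<longleftrightarrow> x$1 = y$1 \<and> x$2 = y$2"
  by (auto simp: vec_eq_iff forall_2)

lemma inner2: "(x::real^2) \<bullet> y = x$1*y$1 + x$2*y$2"
  by (simp add: inner_vec_def sum_2)

lemma norm2: "norm (x::real^2) = sqrt ((x$1)^2 + (x$2)^2)"
  by (simp add: norm_vec_def L2_set_def sum_2)

lemma lin2: assumes "linear (L::real^2 \<Rightarrow> real)"
  shows "L h = h$1 * L (axis 1 1) + h$2 * L (axis 2 1)"
proof -
  have "h = h$1 *\<^sub>R axis 1 1 + h$2 *\<^sub>R axis 2 1"
    by (simp add: vec2_eq axis_def)
  then have "L h = L (h$1 *\<^sub>R axis 1 1 + h$2 *\<^sub>R axis 2 1)" by simp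
  also have "\<dots> = h$1 * L (axis 1 1) + h$2 * L (axis 2 1)"
    using assms by (simp add: linear_add linear_scale)
  finally show ?thesis .
qed

lemma ray_far: assumes "norm (x::real^2) < 1" "norm w = 1" "t \<ge> 2"
  shows "norm (x + t *\<^sub>R w) > 1"
proof -
  have "norm (t *\<^sub>R w) \<le> norm (x + t *\<^sub>R w) + norm x"
    by (metis add_diff_cancel_left' norm_triangle_ineq4 add.commute norm_minus_commute)
  then show ?thesis using assms by simp
qed

lemma ray_int: fixes g :: "real \<Rightarrow> real"
  assumes "(g has_integral I) {0..T}" "\<And>t. t \<ge> T \<Longrightarrow> g t = 0" "0 \<le> T"
  shows "(g has_integral I) {0..}" "integral {0..} g = I"
proof -
  have "(g has_integral 0) {T..}" by (rule has_integral_is_0) (use assms in auto)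
  moreover have "negligible ({0..T} \<inter> {T..})"
    by (rule negligible_subset[of "{T}"]) auto
  ultimately have "(g has_integral (I + 0)) ({0..T} \<union> {T..})"
    using has_integral_Un assms(1) by blast
  moreover have "{0..T} \<union> {T..} = {0::real..}" using assms(3) by auto
  ultimately show "(g has_integral I) {0..}" by simp
  then show "integral {0..} g = I" by blast
qed

lemma cont_test:
  fixes f' :: "real^2 \<Rightarrow> (real^2) \<Rightarrow>\<^sub>L (real^2)"
  assumes fc: "continuous_on UNIV f'"
  shows "continuous_on (S \<times> T) (\<lambda>(y, t::real). blinfun_inner_left w o\<^sub>L f' (y + t *\<^sub>R w))"
proof -
  have c1: "continuous_on (S \<times> T) (\<lambda>p::(real^2) \<times> real. fst p + snd p *\<^sub>R w)"
    by (intro continuous_intros)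
  have c2: "continuous_on (S \<times> T) (\<lambda>p::(real^2) \<times> real. f' (fst p + snd p *\<^sub>R w))"
    by (rule continuous_on_compose2[OF fc c1]) auto
  have "continuous_on (S \<times> T) (\<lambda>p::(real^2) \<times> real. blinfun_inner_left w o\<^sub>L f' (fst p + snd p *\<^sub>R w))"
    by (intro continuous_intros c2)
  then show ?thesis by (simp add: split_beta)
qed

lemma cont_test2:
  fixes f' :: "real^2 \<Rightarrow> (real^2) \<Rightarrow>\<^sub>L (real^2)"
  assumes fc: "continuous_on UNIV f'"
  shows "continuous_on T (\<lambda>t::real. blinfun_inner_left w o\<^sub>L f' (x + t *\<^sub>R w))"
proof -
  have c1: "continuous_on T (\<lambda>t::real. x + t *\<^sub>R w)"
    by (intro continuous_intros)
  have c2: "continuous_on T (\<lambda>t. f' (x + t *\<^sub>R w))"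
    by (rule continuous_on_compose2[OF fc c1]) auto
  show ?thesis
    by (intro continuous_intros c2)
qed

lemma ftc_ray:
  assumes "\<And>y. (\<phi>::real^2\<Rightarrow>real) differentiable at y" "0 \<le> T"
  shows "((\<lambda>t. frechet_derivative \<phi> (at (x + t *\<^sub>R w)) w) has_integral (\<phi> (x + T *\<^sub>R w) - \<phi> x)) {0..T}"
proof -
  define g where "g = (\<lambda>t. \<phi> (x + t *\<^sub>R w))"
  have "((\<lambda>t. frechet_derivative \<phi> (at (x + t *\<^sub>R w)) w) has_integral (g T - g 0)) {0..T}"
  proof (rule fundamental_theorem_of_calculus[OF assms(2)])
    fix t assume "t \<in> {0..T}"
    have d1: "((\<lambda>t. x + t *\<^sub>R w) has_derivative (\<lambda>h. h *\<^sub>R w)) (at t)"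
      by (auto intro!: derivative_eq_intros)
    have d2: "(\<phi> has_derivative frechet_derivative \<phi> (at (x + t *\<^sub>R w))) (at (x + t *\<^sub>R w))"
      using assms(1) frechet_derivative_works by blast
    have lin: "linear (frechet_derivative \<phi> (at (x + t *\<^sub>R w)))"
      using d2 has_derivative_linear by blast
    have "(g has_derivative (\<lambda>h. frechet_derivative \<phi> (at (x + t *\<^sub>R w)) (h *\<^sub>R w))) (at t)"
      using has_derivative_compose[OF d1 d2] by (simp add: o_def g_def)
    then have "(g has_vector_derivative frechet_derivative \<phi> (at (x + t *\<^sub>R w)) w) (at t)"
      unfolding has_vector_derivative_def using lin by (simp add: linear_scale)
    then show "(g has_vector_derivative frechet_derivative \<phi> (at (x + t *\<^sub>R w)) w) (at t within {0..T})"
      by (rule has_vector_derivative_at_within)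
  qed
  then show ?thesis by (simp add: g_def)
qed

lemma Iw_deriv:
  fixes f :: "real^2 \<Rightarrow> real^2" and f' :: "real^2 \<Rightarrow> (real^2) \<Rightarrow>\<^sub>L (real^2)"
  assumes fd: "\<And>y. (f has_derivative blinfun_apply (f' y)) (at y)" and fc: "continuous_on UNIV f'"
    and x: "x \<in> ball 0 1"
  shows "((\<lambda>x. integral {0..2} (\<lambda>t. w \<bullet> f (x + t *\<^sub>R w))) has_derivative
          (\<lambda>h. integral {0..2} (\<lambda>t. w \<bullet> f' (x + t *\<^sub>R w) h))) (at x)"
proof -
  have fcont: "continuous_on UNIV f"
    using fd by (meson continuous_at_imp_continuous_on has_derivative_continuous UNIV_I)
  have L: "((\<lambda>x. integral (cbox 0 2) (\<lambda>t. w \<bullet> f (x + t *\<^sub>R w))) has_derivative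
     integral (cbox 0 2) (\<lambda>t. blinfun_inner_left w o\<^sub>L f' (x + t *\<^sub>R w))) (at x within ball 0 1)"
  proof (rule leibniz_rule[where f="\<lambda>x t. w \<bullet> f (x + t *\<^sub>R w)"])
    fix y t
    have "((\<lambda>y. y + t *\<^sub>R w) has_derivative (\<lambda>h. h)) (at y)"
      by (auto intro!: derivative_eq_intros)
    from has_derivative_compose[OF this fd]
    have "((\<lambda>y. f (y + t *\<^sub>R w)) has_derivative f' (y + t *\<^sub>R w)) (at y)" by (simp add: o_def)
    then have "((\<lambda>y. w \<bullet> f (y + t *\<^sub>R w)) has_derivative (\<lambda>h. w \<bullet> f' (y + t *\<^sub>R w) h)) (at y)"
      by (auto intro!: derivative_eq_intros)
    moreover have "blinfun_apply (blinfun_inner_left w o\<^sub>L f' (y + t *\<^sub>R w)) = (\<lambda>h. w \<bullet> f' (y + t *\<^sub>R w) h)"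
      by (auto simp: inner_commute)
    ultimately show "((\<lambda>y. w \<bullet> f (y + t *\<^sub>R w)) has_derivative blinfun_apply (blinfun_inner_left w o\<^sub>L f' (y + t *\<^sub>R w))) (at y within ball 0 1)"
      by (metis has_derivative_at_withinI)
  next
    fix y
    have c1: "continuous_on (cbox 0 2) (\<lambda>t::real. y + t *\<^sub>R w)"
      by (intro continuous_intros)
    have "continuous_on (cbox 0 2) (\<lambda>t::real. f (y + t *\<^sub>R w))"
      by (rule continuous_on_compose2[OF fcont c1]) auto
    then have "continuous_on (cbox 0 2) (\<lambda>t::real. w \<bullet> f (y + t *\<^sub>R w))"
      by (intro continuous_intros)
    then show "(\<lambda>t. w \<bullet> f (y + t *\<^sub>R w)) integrable_on cbox 0 2"
      by (rule integrable_continuous)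
  next
    show "continuous_on (ball 0 1 \<times> cbox 0 2) (\<lambda>(y, t). blinfun_inner_left w o\<^sub>L f' (y + t *\<^sub>R w))"
      by (rule cont_test[OF fc])
  next
    show "x \<in> ball 0 1" by (rule x)
  qed auto
  have "((\<lambda>x. integral {0..2} (\<lambda>t. w \<bullet> f (x + t *\<^sub>R w))) has_derivative
     integral (cbox 0 2) (\<lambda>t. blinfun_inner_left w o\<^sub>L f' (x + t *\<^sub>R w))) (at x)"
    using L x at_within_open[of x "ball 0 1"] by simp
  moreover have "blinfun_apply (integral (cbox 0 2) (\<lambda>t. blinfun_inner_left w o\<^sub>L f' (x + t *\<^sub>R w))) =
     (\<lambda>h. integral {0..2} (\<lambda>t. w \<bullet> f' (x + t *\<^sub>R w) h))"
  proof
    fix h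
    have "continuous_on (cbox 0 2) (\<lambda>t. blinfun_inner_left w o\<^sub>L f' (x + t *\<^sub>R w))"
      by (rule cont_test2[OF fc])
    then have "(\<lambda>t. blinfun_inner_left w o\<^sub>L f' (x + t *\<^sub>R w)) integrable_on cbox 0 2"
      by (rule integrable_continuous)
    then show "blinfun_apply (integral (cbox 0 2) (\<lambda>t. blinfun_inner_left w o\<^sub>L f' (x + t *\<^sub>R w))) h =
       integral {0..2} (\<lambda>t. w \<bullet> f' (x + t *\<^sub>R w) h)"
      by (simp add: blinfun_apply_integral inner_commute)
  qed
  ultimately show ?thesis by simp
qed

lemma annulus_props:
  fixes r R :: real
  shows "open {y::real^2. r < norm (y - 0) \<and> norm (y - 0) < R}"
        "connected {y::real^2. r < norm (y - 0) \<and> norm (y - 0) < R}"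
proof -
  have "{y::real^2. r < norm (y - 0) \<and> norm (y - 0) < R} = {y. r < norm y} \<inter> {y. norm y < R}" by auto
  moreover have "open {y::real^2. r < norm y}" "open {y::real^2. norm y < R}"
    by (auto intro!: open_Collect_less continuous_intros)
  ultimately show "open {y::real^2. r < norm (y - 0) \<and> norm (y - 0) < R}" by auto
  show "connected {y::real^2. r < norm (y - 0) \<and> norm (y - 0) < R}"
    by (rule connected_annulus) simp
qed

lemma solve2:
  fixes a b c d p q :: real
  assumes "a*p + b*q = 0" "c*p + d*q = 0" "a*d - b*c \<noteq> 0"
  shows "p = 0 \<and> q = 0"
proof -
  have "p * (a*d - b*c) = d*(a*p + b*q) - b*(c*p + d*q)" by (simp add: algebra_simps)
  then have "p * (a*d - b*c) = 0" using assms by simp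
  moreover have "q * (a*d - b*c) = a*(c*p + d*q) - c*(a*p + b*q)" by (simp add: algebra_simps)
  then have "q * (a*d - b*c) = 0" using assms by simp
  ultimately show ?thesis using assms(3) by simp
qed

lemma core_L_if:
  fixes \<alpha> :: real and u v :: "real^2" and f :: "real^2 \<Rightarrow> real^2"
  assumes a: "\<alpha> \<noteq> 0" and nu: "norm u = 1" and v: "v = vector [-(u$1), u$2]" and uu: "u$1*u$2 \<noteq> 0"
    and r: "r < 1" and fz: "\<And>y. r < norm y \<Longrightarrow> f y = 0"
    and d\<phi>: "\<And>x. \<phi> differentiable at x" and ft: "\<And>x. f x = tgrad \<alpha> u \<phi> x"
    and x: "x \<in> ball 0 1"
  shows "Lop \<alpha> u v f x = 0"
proof -
  define D where "D y = frechet_derivative \<phi> (at y)" for y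
  have Dd: "(\<phi> has_derivative D y) (at y)" for y
    using d\<phi> frechet_derivative_works D_def by metis
  have Dl: "linear (D y)" for y using Dd has_derivative_linear by blast
  have pd: "pd i \<phi> y = D y (axis i 1)" for i y by (simp add: pd_def D_def)
  have Dexp: "D y h = h$1 * D y (axis 1 1) + h$2 * D y (axis 2 1)" for y h using lin2[OF Dl] by blast
  have nv: "norm v = 1" using nu v by (simp add: norm2)
  have v12: "v$1 = -(u$1)" "v$2 = u$2" using v by simp_all
  have fu: "u \<bullet> f y = -2*\<alpha>*u$1*u$2 * D y u" for y
    using ft[of y] Dexp[of y u] by (simp add: inner2 tgrad_def dt1_def dt2_def pd algebra_simps power2_eq_square)
  have fv: "v \<bullet> f y = -2*u$1*u$2 * D y v" for y
  proof -
    have "v \<bullet> f y = -(u$1) * dt1 \<alpha> u \<phi> y + u$2 * dt2 \<alpha> u \<phi> y" using ft[of y] v12 by (simp add: inner2 tgrad_def)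
    also have "\<dots> = -2*u$1*u$2 * (-(u$1) * D y (axis 1 1) + u$2 * D y (axis 2 1))"
      by (simp add: dt1_def dt2_def pd algebra_simps power2_eq_square)
    also have "\<dots> = -2*u$1*u$2 * D y v" using Dexp[of y v] v12 by simp
    finally show ?thesis .
  qed
  have D0: "(\<phi> has_derivative (\<lambda>h. 0)) (at y)" if "r < norm y" for y
  proof -
    have f0: "f y = 0" using fz that by blast
    let ?p = "D y (axis 1 1)" and ?q = "D y (axis 2 1)"
    have e1: "(-(1+\<alpha>)*u$1*u$2) * ?p + ((1-\<alpha>)*(u$2)^2) * ?q = 0"
      using f0 ft[of y] by (simp add: vec2_eq tgrad_def dt1_def pd algebra_simps)
    have e2: "((1-\<alpha>)*(u$1)^2) * ?p + (-(1+\<alpha>)*u$1*u$2) * ?q = 0"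
      using f0 ft[of y] by (simp add: vec2_eq tgrad_def dt2_def pd algebra_simps)
    have det: "(-(1+\<alpha>)*u$1*u$2) * (-(1+\<alpha>)*u$1*u$2) - ((1-\<alpha>)*(u$2)^2) * ((1-\<alpha>)*(u$1)^2) = 4*\<alpha>*(u$1*u$2)^2"
      by (simp add: algebra_simps power2_eq_square)
    have "4*\<alpha>*(u$1*u$2)^2 \<noteq> 0" using a uu by simp
    then have "(-(1+\<alpha>)*u$1*u$2) * (-(1+\<alpha>)*u$1*u$2) - ((1-\<alpha>)*(u$2)^2) * ((1-\<alpha>)*(u$1)^2) \<noteq> 0"
      by (simp only: det not_False_eq_True)
    then have "?p = 0 \<and> ?q = 0" using solve2[OF e1 e2] by blast
    then have "D y = (\<lambda>h. 0)"
    proof (intro ext)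
      fix h assume pq: "?p = 0 \<and> ?q = 0"
      show "D y h = 0" using Dexp[of y h] pq by simp
    qed
    then show ?thesis using Dd[of y] by simp
  qed
  define A where "A = {y::real^2. r < norm (y - 0) \<and> norm (y - 0) < 3}"
  have const: "\<phi> y = \<phi> z" if "y \<in> A" "z \<in> A" for y z
    using has_derivative_zero_unique_connected[of A \<phi> y z] annulus_props[of r 3] that D0
    unfolding A_def by auto
  have nx: "norm x < 1" using x by simp
  have far: "r < norm (x + t *\<^sub>R w)" if "t \<ge> 2" "norm w = 1" for t w
    using ray_far[OF nx that(2) that(1)] r by simp
  have inA: "x + 2 *\<^sub>R w \<in> A" if "norm w = 1" for w
  proof -
    have "norm (x + 2 *\<^sub>R w) \<le> norm x + norm (2 *\<^sub>R w)" by (rule norm_triangle_ineq)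
    then have "norm (x + 2 *\<^sub>R w) < 3" using nx that by simp
    then show ?thesis using far[of 2 w] that unfolding A_def by simp
  qed
  have Iu: "integral {0..} (\<lambda>t. u \<bullet> f (x + t *\<^sub>R u)) = (-2*\<alpha>*u$1*u$2) * (\<phi> (x + 2 *\<^sub>R u) - \<phi> x)"
  proof (rule ray_int(2))
    have "((\<lambda>t. (-2*\<alpha>*u$1*u$2) * D (x + t *\<^sub>R u) u) has_integral (-2*\<alpha>*u$1*u$2) * (\<phi> (x + 2 *\<^sub>R u) - \<phi> x)) {0..2}"
      using has_integral_mult_right[OF ftc_ray[OF d\<phi>, of 2 x u], where c="-2*\<alpha>*u$1*u$2"] by (simp add: D_def)
    then show "((\<lambda>t. u \<bullet> f (x + t *\<^sub>R u)) has_integral (-2*\<alpha>*u$1*u$2) * (\<phi> (x + 2 *\<^sub>R u) - \<phi> x)) {0..2}"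
      using fu by simp
  next
    fix t :: real assume "2 \<le> t"
    then show "u \<bullet> f (x + t *\<^sub>R u) = 0" using far[of t u] fz nu by simp
  qed simp
  have Iv: "integral {0..} (\<lambda>t. v \<bullet> f (x + t *\<^sub>R v)) = (-2*u$1*u$2) * (\<phi> (x + 2 *\<^sub>R v) - \<phi> x)"
  proof (rule ray_int(2))
    have "((\<lambda>t. (-2*u$1*u$2) * D (x + t *\<^sub>R v) v) has_integral (-2*u$1*u$2) * (\<phi> (x + 2 *\<^sub>R v) - \<phi> x)) {0..2}"
      using has_integral_mult_right[OF ftc_ray[OF d\<phi>, of 2 x v], where c="-2*u$1*u$2"] by (simp add: D_def)
    then show "((\<lambda>t. v \<bullet> f (x + t *\<^sub>R v)) has_integral (-2*u$1*u$2) * (\<phi> (x + 2 *\<^sub>R v) - \<phi> x)) {0..2}"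
      using fv by simp
  next
    fix t :: real assume "2 \<le> t"
    then show "v \<bullet> f (x + t *\<^sub>R v) = 0" using far[of t v] fz nv by simp
  qed simp
  have "\<phi> (x + 2 *\<^sub>R u) = \<phi> (x + 2 *\<^sub>R v)" using const inA nu nv by blast
  then show ?thesis unfolding Lop_def Iu Iv by (simp add: algebra_simps)
qed

lemma fcont_of:
  fixes f :: "real^2 \<Rightarrow> real^2" and f' :: "real^2 \<Rightarrow> (real^2) \<Rightarrow>\<^sub>L (real^2)"
  assumes fd: "\<And>y. (f has_derivative blinfun_apply (f' y)) (at y)"
  shows "continuous_on UNIV f"
  using fd by (meson continuous_at_imp_continuous_on has_derivative_continuous UNIV_I)

lemma Iw_val:
  fixes f :: "real^2 \<Rightarrow> real^2" and f' :: "real^2 \<Rightarrow> (real^2) \<Rightarrow>\<^sub>L (real^2)"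
  assumes fd: "\<And>y. (f has_derivative blinfun_apply (f' y)) (at y)"
    and nx: "norm x < 1" and nw: "norm w = 1" and fz: "\<And>y. 1 < norm y \<Longrightarrow> f y = 0"
  shows "integral {0..2} (\<lambda>t. w \<bullet> f' (x + t *\<^sub>R w) w) = -(w \<bullet> f x)"
proof -
  define g where "g = (\<lambda>t. w \<bullet> f (x + t *\<^sub>R w))"
  have "((\<lambda>t. w \<bullet> f' (x + t *\<^sub>R w) w) has_integral (g 2 - g 0)) {0..2}"
  proof (rule fundamental_theorem_of_calculus)
    fix t :: real
    have d1: "((\<lambda>t. x + t *\<^sub>R w) has_derivative (\<lambda>h. h *\<^sub>R w)) (at t)"
      by (auto intro!: derivative_eq_intros)
    have "((\<lambda>t. f (x + t *\<^sub>R w)) has_derivative (\<lambda>h. f' (x + t *\<^sub>R w) (h *\<^sub>R w))) (at t)"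
      using has_derivative_compose[OF d1 fd] by (simp add: o_def)
    then have "(g has_derivative (\<lambda>h. w \<bullet> f' (x + t *\<^sub>R w) (h *\<^sub>R w))) (at t)"
      unfolding g_def by (auto intro!: derivative_eq_intros)
    moreover have "(\<lambda>h. w \<bullet> f' (x + t *\<^sub>R w) (h *\<^sub>R w)) = (\<lambda>h. h *\<^sub>R (w \<bullet> f' (x + t *\<^sub>R w) w))"
      by (simp add: blinfun.scaleR_right)
    ultimately have "(g has_vector_derivative (w \<bullet> f' (x + t *\<^sub>R w) w)) (at t)"
      unfolding has_vector_derivative_def by simp
    then show "(g has_vector_derivative (w \<bullet> f' (x + t *\<^sub>R w) w)) (at t within {0..2})"
      by (rule has_vector_derivative_at_within)
  qed simp
  moreover have "g 2 = 0" unfolding g_def using fz ray_far[OF nx nw, of 2] by simp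
  moreover have "g 0 = w \<bullet> f x" unfolding g_def by simp
  ultimately show ?thesis by (simp add: integral_unique)
qed

lemma Iw_eq:
  fixes f :: "real^2 \<Rightarrow> real^2"
  assumes fc: "continuous_on UNIV f"
    and nx: "norm x < 1" and nw: "norm w = 1" and fz: "\<And>y. 1 < norm y \<Longrightarrow> f y = 0"
  shows "integral {0..} (\<lambda>t. w \<bullet> f (x + t *\<^sub>R w)) = integral {0..2} (\<lambda>t. w \<bullet> f (x + t *\<^sub>R w))"
proof (rule ray_int(2))
  have c1: "continuous_on {0..2} (\<lambda>t::real. x + t *\<^sub>R w)"
    by (intro continuous_intros)
  have "continuous_on {0..2} (\<lambda>t::real. f (x + t *\<^sub>R w))"
    by (rule continuous_on_compose2[OF fc c1]) auto
  then have "continuous_on {0..2} (\<lambda>t::real. w \<bullet> f (x + t *\<^sub>R w))"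
    by (intro continuous_intros)
  then have "(\<lambda>t. w \<bullet> f (x + t *\<^sub>R w)) integrable_on {0..2}"
    by (rule integrable_continuous_real)
  then show "((\<lambda>t. w \<bullet> f (x + t *\<^sub>R w)) has_integral integral {0..2} (\<lambda>t. w \<bullet> f (x + t *\<^sub>R w))) {0..2}"
    by blast
next
  fix t :: real assume "2 \<le> t"
  then show "w \<bullet> f (x + t *\<^sub>R w) = 0" using fz ray_far[OF nx nw] by simp
qed simp

lemma uv_span:
  fixes L :: "real^2 \<Rightarrow> real"
  assumes "linear L" "u$1*u$2 \<noteq> 0" "v = vector [-(u$1), u$2]" "L u = 0" "L v = 0"
  shows "L h = 0"
proof -
  have v12: "v$1 = -(u$1)" "v$2 = u$2" using assms(3) by simp_all
  let ?p = "L (axis 1 1)" and ?q = "L (axis 2 1)"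
  have e1: "u$1 * ?p + u$2 * ?q = 0" using lin2[OF assms(1), of u] assms(4) by simp
  have e2: "(-(u$1)) * ?p + u$2 * ?q = 0" using lin2[OF assms(1), of v] assms(5) v12 by simp
  have "u$1 * u$2 - u$2 * (-(u$1)) \<noteq> 0" using assms(2) by simp
  then have "?p = 0 \<and> ?q = 0" using solve2[OF e1 e2] by blast
  then show ?thesis using lin2[OF assms(1), of h] by simp
qed

lemma core_L_only_if:
  fixes \<alpha> :: real and u v :: "real^2" and f :: "real^2 \<Rightarrow> real^2"
    and f' :: "real^2 \<Rightarrow> (real^2) \<Rightarrow>\<^sub>L (real^2)"
  assumes a: "\<alpha> \<noteq> 0" and nu: "norm u = 1" and v: "v = vector [-(u$1), u$2]" and uu: "u$1*u$2 \<noteq> 0"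
    and fd: "\<And>y. (f has_derivative blinfun_apply (f' y)) (at y)" and fc: "continuous_on UNIV f'"
    and r: "0 \<le> r" "r < 1" and fz: "\<And>y. r < norm y \<Longrightarrow> f y = 0"
    and L0: "\<forall>x\<in>ball 0 1. Lop \<alpha> u v f x = 0"
  shows "\<exists>\<phi>. (\<forall>x. \<phi> differentiable at x) \<and> (\<forall>x. f x = tgrad \<alpha> u \<phi> x)"
proof -
  have v12: "v$1 = -(u$1)" "v$2 = u$2" using v by simp_all
  have nv: "norm v = 1" using nu v by (simp add: norm2)
  have fz1: "\<And>y. 1 < norm y \<Longrightarrow> f y = 0" using fz r by simp
  have fcont: "continuous_on UNIV f" by (rule fcont_of[OF fd])
  define Iu where "Iu x = integral {0..2} (\<lambda>t. u \<bullet> f (x + t *\<^sub>R u))" for x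
  define Iv where "Iv x = integral {0..2} (\<lambda>t. v \<bullet> f (x + t *\<^sub>R v))" for x
  define DU where "DU x h = integral {0..2} (\<lambda>t. u \<bullet> f' (x + t *\<^sub>R u) h)" for x h
  define DV where "DV x h = integral {0..2} (\<lambda>t. v \<bullet> f' (x + t *\<^sub>R v) h)" for x h
  have HU: "(Iu has_derivative DU x) (at x)" if "x \<in> ball 0 1" for x
    using Iw_deriv[OF fd fc that, of u] unfolding Iu_def[abs_def] DU_def[abs_def] by simp
  have HV: "(Iv has_derivative DV x) (at x)" if "x \<in> ball 0 1" for x
    using Iw_deriv[OF fd fc that, of v] unfolding Iv_def[abs_def] DV_def[abs_def] by simp
  have DUu: "DU x u = -(u \<bullet> f x)" if "x \<in> ball 0 1" for x
    using Iw_val[OF fd _ nu fz1, of x] that unfolding DU_def by simp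
  have DVv: "DV x v = -(v \<bullet> f x)" if "x \<in> ball 0 1" for x
    using Iw_val[OF fd _ nv fz1, of x] that unfolding DV_def by simp
  have IuIv: "Iu x = \<alpha> * Iv x" if "x \<in> ball 0 1" for x
  proof -
    have "Lop \<alpha> u v f x = - Iu x + \<alpha> * Iv x"
      unfolding Lop_def Iu_def Iv_def
      using Iw_eq[OF fcont _ nu fz1, of x] Iw_eq[OF fcont _ nv fz1, of x] that by simp
    then show ?thesis using L0 that by simp
  qed
  have DUV: "DU x = (\<lambda>h. \<alpha> * DV x h)" if x: "x \<in> ball 0 1" for x
  proof -
    have "((\<lambda>y. \<alpha> * Iv y) has_derivative (\<lambda>h. \<alpha> * DV x h)) (at x)"
      using HV[OF x] by (auto intro!: derivative_eq_intros)
    then have "(Iu has_derivative (\<lambda>h. \<alpha> * DV x h)) (at x)"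
      by (rule has_derivative_transform_within_open[where s="ball 0 1"]) (use x IuIv in auto)
    then show ?thesis using HU[OF x] has_derivative_unique by blast
  qed
  have DVu: "\<alpha> * DV x u = -(u \<bullet> f x)" if "x \<in> ball 0 1" for x
    using DUu[OF that] DUV[OF that] by metis
  define B where "B = {y::real^2. r < norm (y - 0) \<and> norm (y - 0) < 1}"
  have Bball: "y \<in> ball 0 1" if "y \<in> B" for y using that unfolding B_def by simp
  have DV0: "(Iv has_derivative (\<lambda>h. 0)) (at y)" if y: "y \<in> B" for y
  proof -
    have f0: "f y = 0" using y fz unfolding B_def by simp
    have lin: "linear (DV y)" using HV[OF Bball[OF y]] has_derivative_linear by blast
    have "DV y u = 0" using DVu[OF Bball[OF y]] f0 a by simp
    moreover have "DV y v = 0" using DVv[OF Bball[OF y]] f0 by simp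
    ultimately have "DV y = (\<lambda>h. 0)" using uv_span[OF lin uu v] by blast
    then show ?thesis using HV[OF Bball[OF y]] by simp
  qed
  define x0 where "x0 = ((1+r)/2) *\<^sub>R v"
  have x0B: "x0 \<in> B" unfolding B_def x0_def using nv r by simp
  have Iv0: "Iv x0 = 0"
  proof -
    have "((\<lambda>t. v \<bullet> f (x0 + t *\<^sub>R v)) has_integral 0) {0..2}"
    proof (rule has_integral_is_0)
      fix t :: real assume t: "t \<in> {0..2}"
      have "x0 + t *\<^sub>R v = ((1+r)/2 + t) *\<^sub>R v" unfolding x0_def by (simp add: algebra_simps)
      then have "norm (x0 + t *\<^sub>R v) = (1+r)/2 + t" using nv r t by simp
      then have "r < norm (x0 + t *\<^sub>R v)" using r t by (auto simp: field_simps)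
      then show "v \<bullet> f (x0 + t *\<^sub>R v) = 0" using fz by simp
    qed
    then show ?thesis unfolding Iv_def by (simp add: integral_unique)
  qed
  have IvB: "Iv y = 0" if "y \<in> B" for y
    using has_derivative_zero_unique_connected[of B Iv y x0] annulus_props[of r 1] DV0 that x0B Iv0
    unfolding B_def by auto
  define \<phi> where "\<phi> y = (if norm y < 1 then Iv y / (2*u$1*u$2) else 0)" for y
  have \<phi>0: "\<phi> y = 0" if "r < norm y" for y
    using IvB[of y] that unfolding \<phi>_def B_def by auto
  have openR: "open {y::real^2. r < norm y}" by (auto intro!: open_Collect_less continuous_intros)
  have Dout: "(\<phi> has_derivative (\<lambda>h. 0)) (at x)" if "\<not> norm x < 1" for x
  proof -
    have "((\<lambda>y. 0::real) has_derivative (\<lambda>h. 0)) (at x)" by simp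
    then show ?thesis
      by (rule has_derivative_transform_within_open[where s="{y. r < norm y}"])
         (use that r \<phi>0 openR in auto)
  qed
  have Din: "(\<phi> has_derivative (\<lambda>h. DV x h / (2*u$1*u$2))) (at x)" if x: "norm x < 1" for x
  proof -
    have "((\<lambda>y. Iv y / (2*u$1*u$2)) has_derivative (\<lambda>h. DV x h / (2*u$1*u$2))) (at x)"
      using HV[of x] x uu by (auto intro!: derivative_eq_intros)
    then show ?thesis
      by (rule has_derivative_transform_within_open[where s="ball 0 1"]) (use x in \<open>auto simp: \<phi>_def\<close>)
  qed
  show ?thesis
  proof (intro exI conjI allI)
    fix x
    show "\<phi> differentiable at x"
      using Din Dout unfolding differentiable_def by blast
  next
    fix x
    show "f x = tgrad \<alpha> u \<phi> x"
    proof (cases "norm x < 1")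
      case False
      have "frechet_derivative \<phi> (at x) = (\<lambda>h. 0)" using Dout[OF False] frechet_derivative_at by metis
      then have "pd i \<phi> x = 0" for i by (simp add: pd_def)
      moreover have "f x = 0" using fz False r by simp
      ultimately show ?thesis by (simp add: vec2_eq tgrad_def dt1_def dt2_def)
    next
      case True
      have xb: "x \<in> ball 0 1" using True by simp
      have "frechet_derivative \<phi> (at x) = (\<lambda>h. DV x h / (2*u$1*u$2))" using Din[OF True] frechet_derivative_at by metis
      then have pdi: "pd i \<phi> x = DV x (axis i 1) / (2*u$1*u$2)" for i by (simp add: pd_def)
      have lin: "linear (DV x)" using HV[OF xb] has_derivative_linear by blast
      define P where "P = DV x (axis 1 1)"
      define Q where "Q = DV x (axis 2 1)"
      define F1 where "F1 = f x $ 1"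
      define F2 where "F2 = f x $ 2"
      have k1: "\<alpha> * (u$1 * P + u$2 * Q) = -(u$1 * F1 + u$2 * F2)"
        using DVu[OF xb] lin2[OF lin, of u] unfolding P_def Q_def F1_def F2_def by (simp add: inner2)
      have k2: "-(u$1) * P + u$2 * Q = -(-(u$1) * F1 + u$2 * F2)"
        using DVv[OF xb] lin2[OF lin, of v] v12 unfolding P_def Q_def F1_def F2_def by (simp add: inner2)
      have g1: "2*u$1*F1 = -(1+\<alpha>)*u$1*P + (1-\<alpha>)*u$2*Q"
        using k1 k2 by (simp add: algebra_simps)
      have g2: "2*u$2*F2 = (1-\<alpha>)*u$1*P - (1+\<alpha>)*u$2*Q"
        using k1 k2 by (simp add: algebra_simps)
      have eF1: "F1 = -(1+\<alpha>)*u$1*u$2*(P/(2*u$1*u$2)) + (1-\<alpha>)*(u$2)^2*(Q/(2*u$1*u$2))"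
      proof -
        have "F1 = (2*u$1*F1)/(2*u$1)" using uu by simp
        also have "\<dots> = (-(1+\<alpha>)*u$1*P + (1-\<alpha>)*u$2*Q)/(2*u$1)" using g1 by simp
        also have "\<dots> = -(1+\<alpha>)*u$1*u$2*(P/(2*u$1*u$2)) + (1-\<alpha>)*(u$2)^2*(Q/(2*u$1*u$2))"
          using uu by (simp add: field_simps power2_eq_square)
        finally show ?thesis .
      qed
      have eF2: "F2 = (1-\<alpha>)*(u$1)^2*(P/(2*u$1*u$2)) - (1+\<alpha>)*u$1*u$2*(Q/(2*u$1*u$2))"
      proof -
        have "F2 = (2*u$2*F2)/(2*u$2)" using uu by simp
        also have "\<dots> = ((1-\<alpha>)*u$1*P - (1+\<alpha>)*u$2*Q)/(2*u$2)" using g2 by simp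
        also have "\<dots> = (1-\<alpha>)*(u$1)^2*(P/(2*u$1*u$2)) - (1+\<alpha>)*u$1*u$2*(Q/(2*u$1*u$2))"
          using uu by (simp add: field_simps power2_eq_square)
        finally show ?thesis .
      qed
      show ?thesis using eF1 eF2
        unfolding vec2_eq tgrad_def dt1_def dt2_def pdi F1_def F2_def P_def Q_def by simp
    qed
  qed
qed

lemma core_L:
  fixes \<alpha> :: real and u v :: "real^2" and f :: "real^2 \<Rightarrow> real^2"
    and f' :: "real^2 \<Rightarrow> (real^2) \<Rightarrow>\<^sub>L (real^2)"
  assumes a: "\<alpha> \<noteq> 0" and nu: "norm u = 1" and v: "v = vector [-(u$1), u$2]" and uu: "u$1*u$2 \<noteq> 0"
    and fd: "\<And>y. (f has_derivative blinfun_apply (f' y)) (at y)" and fc: "continuous_on UNIV f'"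
    and r: "0 \<le> r" "r < 1" and fz: "\<And>y. r < norm y \<Longrightarrow> f y = 0"
  shows "(\<forall>x\<in>ball 0 1. Lop \<alpha> u v f x = 0) \<longleftrightarrow>
           (\<exists>\<phi>. (\<forall>x. \<phi> differentiable at x) \<and> (\<forall>x. f x = tgrad \<alpha> u \<phi> x))"
proof
  assume "\<forall>x\<in>ball 0 1. Lop \<alpha> u v f x = 0"
  then show "\<exists>\<phi>. (\<forall>x. \<phi> differentiable at x) \<and> (\<forall>x. f x = tgrad \<alpha> u \<phi> x)"
    using core_L_only_if[OF a nu v uu fd fc r fz] by blast
next
  assume "\<exists>\<phi>. (\<forall>x. \<phi> differentiable at x) \<and> (\<forall>x. f x = tgrad \<alpha> u \<phi> x)"
  then obtain \<phi> where "\<And>x. \<phi> differentiable at x" "\<And>x. f x = tgrad \<alpha> u \<phi> x" by blast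
  then show "\<forall>x\<in>ball 0 1. Lop \<alpha> u v f x = 0"
    using core_L_if[where f=f and r=r and \<phi>=\<phi>, OF a nu v uu r(2) fz] by blast
qed

definition rotv :: "real^2 \<Rightarrow> real^2" where "rotv z = vector [z$2, -(z$1)]"

lemma rotv_bl: "bounded_linear rotv"
proof -
  have "linear rotv" by (rule linearI) (simp_all add: rotv_def vec2_eq)
  then show ?thesis by (simp add: linear_conv_bounded_linear)
qed

theorem theorem7p1:
  fixes \<alpha> :: real and u v :: "real^2" and f :: "real^2 \<Rightarrow> real^2"
  assumes "\<alpha> \<noteq> 0"
    and "norm u = 1" and "v = vector [-(u$1), u$2]" and "u$1 * u$2 \<noteq> 0"
    and "C2 f" and "supp_in_disc f"
  shows "((\<forall>x\<in>ball 0 1. Lop \<alpha> u v f x = 0) \<longleftrightarrow>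
           (\<exists>\<phi>. (\<forall>x. \<phi> differentiable at x) \<and> (\<forall>x. f x = tgrad \<alpha> u \<phi> x)))
       \<and> ((\<forall>x\<in>ball 0 1. Top \<alpha> u v f x = 0) \<longleftrightarrow>
           (\<exists>\<psi>. (\<forall>x. \<psi> differentiable at x) \<and> (\<forall>x. f x = tgrad_perp \<alpha> u \<psi> x)))"
proof -
  note a = assms(1) and nu = assms(2) and v = assms(3) and uu = assms(4)
  obtain f' f'' where fd: "\<And>y. (f has_derivative blinfun_apply (f' y)) (at y)"
      and fd2: "\<And>y. (f' has_derivative blinfun_apply (f'' y)) (at y)"
    using assms(5) unfolding C2_def by blast
  have fc: "continuous_on UNIV f'"
    using fd2 by (meson continuous_at_imp_continuous_on has_derivative_continuous UNIV_I)
  define K where "K = closure {x. f x \<noteq> 0}"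
  have Kc: "compact K" and Kb: "K \<subseteq> ball 0 1" using assms(6) unfolding supp_in_disc_def K_def by auto
  have sK: "{x. f x \<noteq> 0} \<subseteq> K" unfolding K_def by (rule closure_subset)
  have fK: "f y = 0" if "y \<notin> K" for y using that sK by blast
  obtain r where r: "0 \<le> r" "r < 1" and fz: "\<And>y. r < norm y \<Longrightarrow> f y = 0"
  proof (cases "K = {}")
    case True
    then show ?thesis using that[of 0] fK by auto
  next
    case False
    have "continuous_on K norm" by (intro continuous_intros)
    then obtain m where m: "m \<in> K" "\<And>y. y \<in> K \<Longrightarrow> norm y \<le> norm m"
      using continuous_attains_sup[OF Kc False] by blast
    have "norm m < 1" using m(1) Kb by auto
    moreover have "f y = 0" if "norm m < norm y" for y
      using m(2)[of y] that fK by force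
    ultimately show ?thesis using that[of "norm m"] by auto
  qed
  define g where "g y = rotv (f y)" for y
  define g' where "g' y = Blinfun rotv o\<^sub>L f' y" for y
  have bl: "bounded_linear rotv" by (rule rotv_bl)
  have gd: "(g has_derivative blinfun_apply (g' y)) (at y)" for y
  proof -
    have "(g has_derivative (\<lambda>h. rotv (f' y h))) (at y)"
      unfolding g_def by (rule bounded_linear.has_derivative[OF bl fd])
    moreover have "blinfun_apply (g' y) = (\<lambda>h. rotv (f' y h))"
      unfolding g'_def using bl by (auto simp: bounded_linear_Blinfun_apply)
    ultimately show ?thesis by simp
  qed
  have gc: "continuous_on UNIV g'" unfolding g'_def by (intro continuous_intros fc)
  have gz: "g y = 0" if "r < norm y" for y using fz[OF that] by (simp add: g_def rotv_def vec2_eq)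
  have TL: "Top \<alpha> u v f x = Lop \<alpha> u v g x" for x
  proof -
    have "\<And>w z. perp w \<bullet> f z = w \<bullet> g z" by (simp add: perp_def g_def rotv_def inner2 algebra_simps)
    then show ?thesis unfolding Top_def Lop_def by simp
  qed
  have PG: "f x = tgrad_perp \<alpha> u \<psi> x \<longleftrightarrow> g x = tgrad \<alpha> u \<psi> x" for x \<psi>
    by (auto simp: vec2_eq tgrad_def tgrad_perp_def g_def rotv_def)
  have L1: "(\<forall>x\<in>ball 0 1. Lop \<alpha> u v f x = 0) \<longleftrightarrow>
           (\<exists>\<phi>. (\<forall>x. \<phi> differentiable at x) \<and> (\<forall>x. f x = tgrad \<alpha> u \<phi> x))"
    by (rule core_L[OF a nu v uu fd fc r fz])
  have L2: "(\<forall>x\<in>ball 0 1. Lop \<alpha> u v g x = 0) \<longleftrightarrow>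
           (\<exists>\<phi>. (\<forall>x. \<phi> differentiable at x) \<and> (\<forall>x. g x = tgrad \<alpha> u \<phi> x))"
    by (rule core_L[OF a nu v uu gd gc r gz])
  show ?thesis using L1 L2 by (simp add: TL PG)
qed

end
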